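(* Let $G$ be a set, $\kappa$ a regular cardinal, $L$ a normal modal logic with the finite model property and $T\subseteq\mathrm{Fm}_\kappa(G)$. Then the Lindenbaum–Tarski algebra $\mathrm{LT}_L(G,\kappa,T)$ is a $\kappa$-complete $L$-algebra (every subset of cardinality $<\kappa$ has a meet and a join), with $\bigwedge\{[\psi]:\psi\in S\}=[\bigwedge S]$ and $\bigvee\{[\psi]:\psi\in S\}=[\bigvee S]$ for $|S|<\kappa$.
   Context: $\mathrm{Fm}_\kappa(G)$ is the least set containing $G$ closed under $\neg$, $\Box$, and $\bigwedge S,\bigvee S$ for sets $S$ of size $<\kappa$; $\varphi\leftrightarrow\psi$ abbreviates $(\neg\varphi\vee\psi)\wedge(\neg\psi\vee\varphi)$ with binary $\wedge,\vee$ meaning $\bigwedge,\bigvee$ of two-element sets. The calculus $(G,\kappa,L,T)$ has rules: (Ax) $\varphi\Rightarrow\varphi$; (W) from $\Gamma\Rightarrow\Delta$ infer $\Gamma,\Gamma'\Rightarrow\Delta,\Delta'$; (Cut) from $\Gamma\Rightarrow\Delta,\varphi$ for every $\varphi\in S$ and $S,\Gamma'\Rightarrow\Delta'$ infer $\Gamma,\Gamma'\Rightarrow\Delta,\Delta'$; (L$\neg$) from $\Gamma\Rightarrow\Delta,S$ infer $\neg S,\Gamma\Rightarrow\Delta$; (R$\neg$) from $S,\Gamma\Rightarrow\Delta$ infer $\Gamma\Rightarrow\Delta,\neg S$; for a family $\mathscr S$ of sets each of size $<\kappa$: (L$\bigwedge$) from $\bigcup\mathscr S,\Gamma\Rightarrow\Delta$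 infer $\{\bigwedge S\},\Gamma\Rightarrow\Delta$; (R$\bigwedge$) from $\Gamma\Rightarrow\Delta,\{c(S):S\in\mathscr S\}$ for every choice function $c$ infer $\Gamma\Rightarrow\Delta,\{\bigwedge S:S\in\mathscr S\}$; (L$\bigvee$) from $\{c(S)\},\Gamma\Rightarrow\Delta$ for every choice function $c$ infer $\{\bigvee S:S\in\mathscr S\},\Gamma\Rightarrow\Delta$; (R$\bigvee$) from $\Gamma\Rightarrow\Delta,\bigcup\mathscr S$ infer $\Gamma\Rightarrow\Delta,\{\bigvee S\}$; (Nec) from $S\Rightarrow\varphi$ infer $\Box S\Rightarrow\Box\varphi$; (lf) for sets $S_n$ of size $<\kappa$: from $\{\Box^n\bigvee(I\cap S_n):n\in\omega\},\Gamma\Rightarrow\Delta$ for every finite $I\subseteq\bigcup_nS_n$ infer $\{\Box^n\bigvee S_n:n\in\omega\},\Gamma\Rightarrow\Delta$; (T,L) from $S,\Gamma\Rightarrow\Delta$ infer $\Gamma\Rightarrow\Delta$ for $S\subseteq T\cup L_{(G,\kappa)}$ ($L_{(G,\kappa)}$ = substitution instances in $\mathrm{Fm}_\kappa(G)$ of theorems of $L$). Proofs are well-founded trees. $\mathrm{LT}_L(G,\kappa,T)$ is the quotient of $\mathrm{Fm}_\kappa(G)$ by $\varphi\sim\psi\iff(G,\kappa,L,T)\vdash\ \Rightarrow\varphi\leftrightarrow\psi$, with operations defined on representatives; $[\varphi]\le[\psi]$ iff $\varphi\Rightarrow\psi$ is provable. An $L$-algebra is a modal algebra in the variety corresponding to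 $L$. *)

theory Defs
  imports Main
begin

unbundle cardinal_syntax

text \<open>Big conjunctions/disjunctions of a set S of formulas are represented by an
 index set I (a subset of the index type carrying the cardinal k) together with a
 function f; the formula BigAnd I f stands for the conjunction of the set f ` I.\<close>

datatype ('g,'i) fm =
    Var 'g
  | Neg "('g,'i) fm"
  | Box "('g,'i) fm"
  | BigAnd "'i set" "'i \<Rightarrow> ('g,'i) fm"
  | BigOr "'i set" "'i \<Rightarrow> ('g,'i) fm"

inductive_set Fm :: "'i rel \<Rightarrow> 'g set \<Rightarrow> ('g,'i) fm set" for k G where
  FVar: "g \<in> G \<Longrightarrow> Var g \<in> Fm k G"
| FNeg: "\<phi> \<in> Fm k G \<Longrightarrow> Neg \<phi> \<in> Fm k G"
| FBox: "\<phi> \<in> Fm k G \<Longrightarrow> Box \<phi> \<in> Fm k G"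
| FAnd: "|I| <o k \<Longrightarrow> (\<And>i. i \<in> I \<Longrightarrow> f i \<in> Fm k G) \<Longrightarrow> BigAnd I f \<in> Fm k G"
| FOr: "|I| <o k \<Longrightarrow> (\<And>i. i \<in> I \<Longrightarrow> f i \<in> Fm k G) \<Longrightarrow> BigOr I f \<in> Fm k G"

definition two_idx :: "'i \<times> 'i" where
  "two_idx = (SOME p. fst p \<noteq> snd p)"

definition and2 :: "('g,'i) fm \<Rightarrow> ('g,'i) fm \<Rightarrow> ('g,'i) fm" where
  "and2 \<phi> \<psi> = BigAnd {fst two_idx, snd two_idx} (\<lambda>i. if i = fst two_idx then \<phi> else \<psi>)"

definition or2 :: "('g,'i) fm \<Rightarrow> ('g,'i) fm \<Rightarrow> ('g,'i) fm" where
  "or2 \<phi> \<psi> = BigOr {fst two_idx, snd two_idx} (\<lambda>i. if i = fst two_idx then \<phi> else \<psi>)"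

definition fiff :: "('g,'i) fm \<Rightarrow> ('g,'i) fm \<Rightarrow> ('g,'i) fm" where
  "fiff \<phi> \<psi> = and2 (or2 (Neg \<phi>) \<psi>) (or2 (Neg \<psi>) \<phi>)"

definition ftop :: "('g,'i) fm" where
  "ftop = BigAnd {} (\<lambda>_. undefined)"

definition fbot :: "('g,'i) fm" where
  "fbot = BigOr {} (\<lambda>_. undefined)"

datatype mfm = MVar nat | MNeg mfm | MAnd mfm mfm | MOr mfm mfm | MBox mfm

definition mimp :: "mfm \<Rightarrow> mfm \<Rightarrow> mfm" where
  "mimp a b = MOr (MNeg a) b"

fun msubst :: "(nat \<Rightarrow> mfm) \<Rightarrow> mfm \<Rightarrow> mfm" where
  "msubst s (MVar n) = s n"
| "msubst s (MNeg a) = MNeg (msubst s a)"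
| "msubst s (MAnd a b) = MAnd (msubst s a) (msubst s b)"
| "msubst s (MOr a b) = MOr (msubst s a) (msubst s b)"
| "msubst s (MBox a) = MBox (msubst s a)"

text \<open>Classical evaluation, treating variables and boxed formulas as atoms.\<close>
fun teval :: "(mfm \<Rightarrow> bool) \<Rightarrow> mfm \<Rightarrow> bool" where
  "teval v (MVar n) = v (MVar n)"
| "teval v (MNeg a) = (\<not> teval v a)"
| "teval v (MAnd a b) = (teval v a \<and> teval v b)"
| "teval v (MOr a b) = (teval v a \<or> teval v b)"
| "teval v (MBox a) = v (MBox a)"

definition tautology :: "mfm \<Rightarrow> bool" where
  "tautology \<phi> \<longleftrightarrow> (\<forall>v. teval v \<phi>)"

definition normal_logic :: "mfm set \<Rightarrow> bool" where
  "normal_logic L \<longleftrightarrow>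
     (\<forall>\<phi>. tautology \<phi> \<longrightarrow> \<phi> \<in> L)
   \<and> mimp (MBox (mimp (MVar 0) (MVar 1))) (mimp (MBox (MVar 0)) (MBox (MVar 1))) \<in> L
   \<and> (\<forall>\<phi> \<psi>. \<phi> \<in> L \<longrightarrow> mimp \<phi> \<psi> \<in> L \<longrightarrow> \<psi> \<in> L)
   \<and> (\<forall>\<phi>. \<phi> \<in> L \<longrightarrow> MBox \<phi> \<in> L)
   \<and> (\<forall>\<phi> s. \<phi> \<in> L \<longrightarrow> msubst s \<phi> \<in> L)"

fun ksat :: "'w rel \<Rightarrow> (nat \<Rightarrow> 'w set) \<Rightarrow> 'w \<Rightarrow> mfm \<Rightarrow> bool" where
  "ksat R V w (MVar n) = (w \<in> V n)"
| "ksat R V w (MNeg a) = (\<not> ksat R V w a)"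
| "ksat R V w (MAnd a b) = (ksat R V w a \<and> ksat R V w b)"
| "ksat R V w (MOr a b) = (ksat R V w a \<or> ksat R V w b)"
| "ksat R V w (MBox a) = (\<forall>u. (w, u) \<in> R \<longrightarrow> ksat R V u a)"

definition frame_valid :: "'w set \<Rightarrow> 'w rel \<Rightarrow> mfm \<Rightarrow> bool" where
  "frame_valid W R \<phi> \<longleftrightarrow> (\<forall>V w. w \<in> W \<longrightarrow> ksat R V w \<phi>)"

text \<open>Finite model property: every non-theorem is refuted on a finite frame validating L
 (finite frames coded with worlds in nat).\<close>
definition has_fmp :: "mfm set \<Rightarrow> bool" where
  "has_fmp L \<longleftrightarrow> (\<forall>\<phi>. \<phi> \<notin> L \<longrightarrow>
     (\<exists>(W::nat set) R. finite W \<and> W \<noteq> {} \<and> R \<subseteq> W \<times> W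
        \<and> (\<forall>\<psi>\<in>L. frame_valid W R \<psi>) \<and> \<not> frame_valid W R \<phi>))"

fun inst :: "(nat \<Rightarrow> ('g,'i) fm) \<Rightarrow> mfm \<Rightarrow> ('g,'i) fm" where
  "inst s (MVar n) = s n"
| "inst s (MNeg a) = Neg (inst s a)"
| "inst s (MAnd a b) = and2 (inst s a) (inst s b)"
| "inst s (MOr a b) = or2 (inst s a) (inst s b)"
| "inst s (MBox a) = Box (inst s a)"

definition Linst :: "'i rel \<Rightarrow> 'g set \<Rightarrow> mfm set \<Rightarrow> ('g,'i) fm set" where
  "Linst k G L = {inst s \<phi> | s \<phi>. \<phi> \<in> L \<and> (\<forall>n. s n \<in> Fm k G)}"

definition good_family :: "'i rel \<Rightarrow> 'g set \<Rightarrow> ('i set \<times> ('i \<Rightarrow> ('g,'i) fm)) set \<Rightarrow> bool" where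
  "good_family k G F \<longleftrightarrow> (\<forall>(I,f)\<in>F. |I| <o k \<and> f ` I \<subseteq> Fm k G)"

inductive prov :: "'i rel \<Rightarrow> 'g set \<Rightarrow> mfm set \<Rightarrow> ('g,'i) fm set
    \<Rightarrow> ('g,'i) fm set \<Rightarrow> ('g,'i) fm set \<Rightarrow> bool"
  for k G L T where
  Ax: "\<phi> \<in> Fm k G \<Longrightarrow> prov k G L T {\<phi>} {\<phi>}"
| W: "prov k G L T \<Gamma> \<Delta> \<Longrightarrow> \<Gamma>' \<subseteq> Fm k G \<Longrightarrow> \<Delta>' \<subseteq> Fm k G
      \<Longrightarrow> prov k G L T (\<Gamma> \<union> \<Gamma>') (\<Delta> \<union> \<Delta>')"
| Cut: "\<Gamma> \<subseteq> Fm k G \<Longrightarrow> \<Delta> \<subseteq> Fm k G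
      \<Longrightarrow> (\<And>\<phi>. \<phi> \<in> S \<Longrightarrow> prov k G L T \<Gamma> (\<Delta> \<union> {\<phi>}))
      \<Longrightarrow> prov k G L T (S \<union> \<Gamma>') \<Delta>'
      \<Longrightarrow> prov k G L T (\<Gamma> \<union> \<Gamma>') (\<Delta> \<union> \<Delta>')"
| LNeg: "prov k G L T \<Gamma> (\<Delta> \<union> S) \<Longrightarrow> prov k G L T (Neg ` S \<union> \<Gamma>) \<Delta>"
| RNeg: "prov k G L T (S \<union> \<Gamma>) \<Delta> \<Longrightarrow> prov k G L T \<Gamma> (\<Delta> \<union> Neg ` S)"
| LAnd: "good_family k G F
      \<Longrightarrow> prov k G L T ((\<Union>(I,f)\<in>F. f ` I) \<union> \<Gamma>) \<Delta>
      \<Longrightarrow> prov k G L T ((\<lambda>(I,f). BigAnd I f) ` F \<union> \<Gamma>) \<Delta>"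
| RAnd: "good_family k G F \<Longrightarrow> \<Gamma> \<subseteq> Fm k G \<Longrightarrow> \<Delta> \<subseteq> Fm k G
      \<Longrightarrow> (\<And>c. (\<forall>(I,f)\<in>F. c (f ` I) \<in> f ` I)
             \<Longrightarrow> prov k G L T \<Gamma> (\<Delta> \<union> (\<lambda>(I,f). c (f ` I)) ` F))
      \<Longrightarrow> prov k G L T \<Gamma> (\<Delta> \<union> (\<lambda>(I,f). BigAnd I f) ` F)"
| LOr: "good_family k G F \<Longrightarrow> \<Gamma> \<subseteq> Fm k G \<Longrightarrow> \<Delta> \<subseteq> Fm k G
      \<Longrightarrow> (\<And>c. (\<forall>(I,f)\<in>F. c (f ` I) \<in> f ` I)
             \<Longrightarrow> prov k G L T ((\<lambda>(I,f). c (f ` I)) ` F \<union> \<Gamma>) \<Delta>)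
      \<Longrightarrow> prov k G L T ((\<lambda>(I,f). BigOr I f) ` F \<union> \<Gamma>) \<Delta>"
| ROr: "good_family k G F
      \<Longrightarrow> prov k G L T \<Gamma> (\<Delta> \<union> (\<Union>(I,f)\<in>F. f ` I))
      \<Longrightarrow> prov k G L T \<Gamma> (\<Delta> \<union> (\<lambda>(I,f). BigOr I f) ` F)"
| Nec: "prov k G L T S {\<phi>} \<Longrightarrow> prov k G L T (Box ` S) {Box \<phi>}"
| lf: "(\<And>n. |J n| <o k \<and> h n ` J n \<subseteq> Fm k G) \<Longrightarrow> \<Gamma> \<subseteq> Fm k G \<Longrightarrow> \<Delta> \<subseteq> Fm k G
      \<Longrightarrow> (\<And>I. finite I \<Longrightarrow> I \<subseteq> (\<Union>n. h n ` J n)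
             \<Longrightarrow> prov k G L T ((\<lambda>n. (Box ^^ n) (BigOr (J n \<inter> h n -` I) (h n))) ` UNIV \<union> \<Gamma>) \<Delta>)
      \<Longrightarrow> prov k G L T ((\<lambda>n. (Box ^^ n) (BigOr (J n) (h n))) ` UNIV \<union> \<Gamma>) \<Delta>"
| TL: "S \<subseteq> T \<union> Linst k G L \<Longrightarrow> prov k G L T (S \<union> \<Gamma>) \<Delta> \<Longrightarrow> prov k G L T \<Gamma> \<Delta>"

record 'a malg =
  mcar :: "'a set"
  mmeet :: "'a \<Rightarrow> 'a \<Rightarrow> 'a"
  mjoin :: "'a \<Rightarrow> 'a \<Rightarrow> 'a"
  mneg :: "'a \<Rightarrow> 'a"
  mtop :: 'a
  mbot :: 'a
  mbox :: "'a \<Rightarrow> 'a"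

text \<open>Boolean algebra (Huntington's postulates) with a normal operator box.\<close>
definition modal_algebra :: "'a malg \<Rightarrow> bool" where
  "modal_algebra A \<longleftrightarrow>
     mtop A \<in> mcar A \<and> mbot A \<in> mcar A
   \<and> (\<forall>a\<in>mcar A. mneg A a \<in> mcar A \<and> mbox A a \<in> mcar A)
   \<and> (\<forall>a\<in>mcar A. \<forall>b\<in>mcar A. mmeet A a b \<in> mcar A \<and> mjoin A a b \<in> mcar A)
   \<and> (\<forall>a\<in>mcar A. \<forall>b\<in>mcar A. mmeet A a b = mmeet A b a \<and> mjoin A a b = mjoin A b a)
   \<and> (\<forall>a\<in>mcar A. \<forall>b\<in>mcar A. \<forall>c\<in>mcar A.
        mmeet A a (mjoin A b c) = mjoin A (mmeet A a b) (mmeet A a c)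
      \<and> mjoin A a (mmeet A b c) = mmeet A (mjoin A a b) (mjoin A a c))
   \<and> (\<forall>a\<in>mcar A. mjoin A a (mbot A) = a \<and> mmeet A a (mtop A) = a)
   \<and> (\<forall>a\<in>mcar A. mjoin A a (mneg A a) = mtop A \<and> mmeet A a (mneg A a) = mbot A)
   \<and> mbox A (mtop A) = mtop A
   \<and> (\<forall>a\<in>mcar A. \<forall>b\<in>mcar A. mbox A (mmeet A a b) = mmeet A (mbox A a) (mbox A b))"

fun meval :: "'a malg \<Rightarrow> (nat \<Rightarrow> 'a) \<Rightarrow> mfm \<Rightarrow> 'a" where
  "meval A v (MVar n) = v n"
| "meval A v (MNeg a) = mneg A (meval A v a)"
| "meval A v (MAnd a b) = mmeet A (meval A v a) (meval A v b)"
| "meval A v (MOr a b) = mjoin A (meval A v a) (meval A v b)"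
| "meval A v (MBox a) = mbox A (meval A v a)"

definition L_algebra :: "mfm set \<Rightarrow> 'a malg \<Rightarrow> bool" where
  "L_algebra L A \<longleftrightarrow> modal_algebra A \<and>
     (\<forall>\<phi>\<in>L. \<forall>v. (\<forall>n. v n \<in> mcar A) \<longrightarrow> meval A v \<phi> = mtop A)"

definition mle :: "'a malg \<Rightarrow> 'a \<Rightarrow> 'a \<Rightarrow> bool" where
  "mle A a b \<longleftrightarrow> mmeet A a b = a"

definition is_glb :: "'a malg \<Rightarrow> 'a set \<Rightarrow> 'a \<Rightarrow> bool" where
  "is_glb A X m \<longleftrightarrow> m \<in> mcar A \<and> (\<forall>x\<in>X. mle A m x)
     \<and> (\<forall>y\<in>mcar A. (\<forall>x\<in>X. mle A y x) \<longrightarrow> mle A y m)"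

definition is_lub :: "'a malg \<Rightarrow> 'a set \<Rightarrow> 'a \<Rightarrow> bool" where
  "is_lub A X m \<longleftrightarrow> m \<in> mcar A \<and> (\<forall>x\<in>X. mle A x m)
     \<and> (\<forall>y\<in>mcar A. (\<forall>x\<in>X. mle A x y) \<longrightarrow> mle A m y)"

definition kappa_complete :: "'k rel \<Rightarrow> 'a malg \<Rightarrow> bool" where
  "kappa_complete k A \<longleftrightarrow> (\<forall>X. X \<subseteq> mcar A \<and> |X| <o k \<longrightarrow>
     (\<exists>m. is_glb A X m) \<and> (\<exists>j. is_lub A X j))"

definition lt_rel :: "'i rel \<Rightarrow> 'g set \<Rightarrow> mfm set \<Rightarrow> ('g,'i) fm set \<Rightarrow> ('g,'i) fm rel" where
  "lt_rel k G L T = {(\<phi>,\<psi>). \<phi> \<in> Fm k G \<and> \<psi> \<in> Fm k G \<and> prov k G L T {} {fiff \<phi> \<psi>}}"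

definition lt_cls :: "'i rel \<Rightarrow> 'g set \<Rightarrow> mfm set \<Rightarrow> ('g,'i) fm set \<Rightarrow> ('g,'i) fm \<Rightarrow> ('g,'i) fm set" where
  "lt_cls k G L T \<phi> = lt_rel k G L T `` {\<phi>}"

definition rep :: "'a set \<Rightarrow> 'a" where
  "rep X = (SOME \<phi>. \<phi> \<in> X)"

definition LT :: "'i rel \<Rightarrow> 'g set \<Rightarrow> mfm set \<Rightarrow> ('g,'i) fm set \<Rightarrow> ('g,'i) fm set malg" where
  "LT k G L T =
    \<lparr> mcar = Fm k G // lt_rel k G L T,
      mmeet = (\<lambda>X Y. lt_cls k G L T (and2 (rep X) (rep Y))),
      mjoin = (\<lambda>X Y. lt_cls k G L T (or2 (rep X) (rep Y))),
      mneg = (\<lambda>X. lt_cls k G L T (Neg (rep X))),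
      mtop = lt_cls k G L T ftop,
      mbot = lt_cls k G L T fbot,
      mbox = (\<lambda>X. lt_cls k G L T (Box (rep X))) \<rparr>"

definition LT_well_defined :: "'i rel \<Rightarrow> 'g set \<Rightarrow> mfm set \<Rightarrow> ('g,'i) fm set \<Rightarrow> bool" where
  "LT_well_defined k G L T \<longleftrightarrow> equiv (Fm k G) (lt_rel k G L T)
   \<and> (\<forall>\<phi> \<phi>' \<psi> \<psi>'. (\<phi>,\<phi>') \<in> lt_rel k G L T \<longrightarrow> (\<psi>,\<psi>') \<in> lt_rel k G L T \<longrightarrow>
        (Neg \<phi>, Neg \<phi>') \<in> lt_rel k G L T \<and> (Box \<phi>, Box \<phi>') \<in> lt_rel k G L T
      \<and> (and2 \<phi> \<psi>, and2 \<phi>' \<psi>') \<in> lt_rel k G L T \<and> (or2 \<phi> \<psi>, or2 \<phi>' \<psi>') \<in> lt_rel k G L T)"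

end

theory Submission
  imports Defs
begin

inductive_cases FmNegE: "Neg \<phi> \<in> Fm k G"
inductive_cases FmBoxE: "Box \<phi> \<in> Fm k G"
inductive_cases FmAndE: "BigAnd I f \<in> Fm k G"
inductive_cases FmOrE: "BigOr I f \<in> Fm k G"

context
  fixes k :: "'i rel" and G :: "'g set" and L :: "mfm set" and T :: "('g,'i) fm set"
  assumes co: "card_order k" and ci: "cinfinite k"
begin

abbreviation "FF \<equiv> Fm k G"
abbreviation "Pv \<equiv> prov k G L T"

lemma finlt: "finite A \<Longrightarrow> |A| <o k"
proof -
  assume fA: "finite A"
  have c: "Card_order k" using card_order_on_Card_order[OF co] by (rule conjunct2)
  have w1: "Well_order |A|" by (rule card_of_Well_order)
  have w2: "Well_order |Field k|" by (rule card_of_Well_order)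
  have f1: "finite (Field (card_of A))" using fA by (simp only: Field_card_of)
  have f2: "infinite (Field (card_of (Field k)))" using ci unfolding cinfinite_def Field_card_of .
  have "|A| <o |Field k|" by (rule finite_ordLess_infinite[OF w1 w2 f1 f2])
  moreover have "|Field k| =o k" by (rule card_of_Field_ordIso[OF c])
  ultimately show ?thesis by (rule ordLess_ordIso_trans)
qed

lemma ne2: "fst (two_idx::'i\<times>'i) \<noteq> snd two_idx"
proof -
  have inf: "infinite (UNIV::'i set)" by (rule infinite_super[OF subset_UNIV ci[unfolded cinfinite_def]])
  have "\<exists>b::'i. b \<noteq> undefined"
  proof (rule ccontr)
    assume "\<not> (\<exists>b::'i. b \<noteq> undefined)"
    hence eq: "UNIV = {undefined::'i}" by auto
    have "finite {undefined::'i}" by simp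
    hence "finite (UNIV::'i set)" by (simp only: eq)
    thus False using inf by (rule notE[rotated])
  qed
  then obtain b :: 'i where "b \<noteq> undefined" by (rule exE)
  hence "\<exists>p::'i\<times>'i. fst p \<noteq> snd p" by (intro exI[of _ "(b,undefined)"]) simp
  thus ?thesis unfolding two_idx_def by (rule someI_ex)
qed

lemma img2: "(\<lambda>i. if i = fst (two_idx::'i\<times>'i) then \<phi> else \<psi>) ` {fst two_idx, snd two_idx} = {\<phi>, \<psi>}"
  using ne2 by (simp add: insert_commute)

lemma Fm_Neg[simp]: "Neg \<phi> \<in> FF \<longleftrightarrow> \<phi> \<in> FF"
  by (auto intro: Fm.FNeg elim: FmNegE)
lemma Fm_Box[simp]: "Box \<phi> \<in> FF \<longleftrightarrow> \<phi> \<in> FF"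
  by (auto intro: Fm.FBox elim: FmBoxE)
lemma Fm_BigAnd: "BigAnd I f \<in> FF \<longleftrightarrow> |I| <o k \<and> (\<forall>i\<in>I. f i \<in> FF)"
  by (auto intro: Fm.FAnd elim: FmAndE)
lemma Fm_BigOr: "BigOr I f \<in> FF \<longleftrightarrow> |I| <o k \<and> (\<forall>i\<in>I. f i \<in> FF)"
  by (auto intro: Fm.FOr elim: FmOrE)
lemma Fm_and2[simp]: "and2 \<phi> \<psi> \<in> FF \<longleftrightarrow> \<phi> \<in> FF \<and> \<psi> \<in> FF"
  unfolding and2_def Fm_BigAnd using finlt[of "{fst (two_idx::'i\<times>'i), snd two_idx}"] ne2 by auto
lemma Fm_or2[simp]: "or2 \<phi> \<psi> \<in> FF \<longleftrightarrow> \<phi> \<in> FF \<and> \<psi> \<in> FF"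
  unfolding or2_def Fm_BigOr using finlt[of "{fst (two_idx::'i\<times>'i), snd two_idx}"] ne2 by auto
lemma Fm_ftop[simp]: "ftop \<in> FF"
  unfolding ftop_def Fm_BigAnd using finlt[of "{}"] by auto
lemma Fm_fbot[simp]: "fbot \<in> FF"
  unfolding fbot_def Fm_BigOr using finlt[of "{}"] by auto
lemma Fm_fiff[simp]: "fiff \<phi> \<psi> \<in> FF \<longleftrightarrow> \<phi> \<in> FF \<and> \<psi> \<in> FF"
  unfolding fiff_def by auto

lemma wk: "Pv \<Gamma> \<Delta> \<Longrightarrow> \<Gamma> \<subseteq> \<Gamma>' \<Longrightarrow> \<Delta> \<subseteq> \<Delta>' \<Longrightarrow> \<Gamma>' \<subseteq> FF \<Longrightarrow> \<Delta>' \<subseteq> FF \<Longrightarrow> Pv \<Gamma>' \<Delta>'"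
proof -
  assume a: "Pv \<Gamma> \<Delta>" "\<Gamma> \<subseteq> \<Gamma>'" "\<Delta> \<subseteq> \<Delta>'" "\<Gamma>' \<subseteq> FF" "\<Delta>' \<subseteq> FF"
  have "Pv (\<Gamma> \<union> \<Gamma>') (\<Delta> \<union> \<Delta>')" using a(1,4,5) by (rule W)
  moreover have "\<Gamma> \<union> \<Gamma>' = \<Gamma>'" "\<Delta> \<union> \<Delta>' = \<Delta>'" using a(2,3) by auto
  ultimately show ?thesis by simp
qed

lemma ax: "\<phi> \<in> \<Gamma> \<Longrightarrow> \<phi> \<in> \<Delta> \<Longrightarrow> \<Gamma> \<subseteq> FF \<Longrightarrow> \<Delta> \<subseteq> FF \<Longrightarrow> Pv \<Gamma> \<Delta>"
  by (rule wk[OF Ax[where \<phi>=\<phi>]]) auto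

lemma cut: "\<Gamma> \<subseteq> FF \<Longrightarrow> \<Delta> \<subseteq> FF \<Longrightarrow> Pv \<Gamma> (insert \<phi> \<Delta>) \<Longrightarrow> Pv (insert \<phi> \<Gamma>) \<Delta> \<Longrightarrow> Pv \<Gamma> \<Delta>"
proof -
  assume a: "\<Gamma> \<subseteq> FF" "\<Delta> \<subseteq> FF" "Pv \<Gamma> (insert \<phi> \<Delta>)" "Pv (insert \<phi> \<Gamma>) \<Delta>"
  have "Pv (\<Gamma> \<union> \<Gamma>) (\<Delta> \<union> \<Delta>)" by (rule Cut[where S="{\<phi>}"]) (use a in auto)
  thus ?thesis by simp
qed

lemma lneg: "Neg \<phi> \<in> \<Gamma> \<Longrightarrow> Pv \<Gamma> (insert \<phi> \<Delta>) \<Longrightarrow> Pv \<Gamma> \<Delta>"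
  using LNeg[where S="{\<phi>}" and \<Gamma>=\<Gamma> and \<Delta>=\<Delta>] by (simp add: insert_absorb)
lemma rneg: "Neg \<phi> \<in> \<Delta> \<Longrightarrow> Pv (insert \<phi> \<Gamma>) \<Delta> \<Longrightarrow> Pv \<Gamma> \<Delta>"
  using RNeg[where S="{\<phi>}" and \<Gamma>=\<Gamma> and \<Delta>=\<Delta>] by (simp add: insert_absorb)

lemma gf1: "good_family k G {(I,f)} \<longleftrightarrow> |I| <o k \<and> f ` I \<subseteq> FF"
  unfolding good_family_def by auto

lemma land: "BigAnd I f \<in> \<Gamma> \<Longrightarrow> |I| <o k \<Longrightarrow> f ` I \<subseteq> FF \<Longrightarrow> Pv (f ` I \<union> \<Gamma>) \<Delta> \<Longrightarrow> Pv \<Gamma> \<Delta>"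
  using LAnd[where F="{(I,f)}" and \<Gamma>=\<Gamma> and \<Delta>=\<Delta>] gf1 by (simp add: insert_absorb)
lemma ror: "BigOr I f \<in> \<Delta> \<Longrightarrow> |I| <o k \<Longrightarrow> f ` I \<subseteq> FF \<Longrightarrow> Pv \<Gamma> (\<Delta> \<union> f ` I) \<Longrightarrow> Pv \<Gamma> \<Delta>"
  using ROr[where F="{(I,f)}" and \<Gamma>=\<Gamma> and \<Delta>=\<Delta>] gf1 by (simp add: insert_absorb)

lemma rand: "BigAnd I f \<in> \<Delta> \<Longrightarrow> |I| <o k \<Longrightarrow> f ` I \<subseteq> FF \<Longrightarrow> \<Gamma> \<subseteq> FF \<Longrightarrow> \<Delta> \<subseteq> FF
   \<Longrightarrow> (\<And>i. i \<in> I \<Longrightarrow> Pv \<Gamma> (insert (f i) \<Delta>)) \<Longrightarrow> Pv \<Gamma> \<Delta>"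
proof -
  assume a: "BigAnd I f \<in> \<Delta>" "|I| <o k" "f ` I \<subseteq> FF" "\<Gamma> \<subseteq> FF" "\<Delta> \<subseteq> FF"
    and p: "\<And>i. i \<in> I \<Longrightarrow> Pv \<Gamma> (insert (f i) \<Delta>)"
  have "Pv \<Gamma> (\<Delta> \<union> (\<lambda>(I,f). BigAnd I f) ` {(I,f)})"
  proof (rule RAnd)
    show "good_family k G {(I, f)}" using a gf1 by auto
    show "\<Gamma> \<subseteq> FF" "\<Delta> \<subseteq> FF" using a by auto
    fix c assume "\<forall>(I', f')\<in>{(I, f)}. c (f' ` I') \<in> f' ` I'"
    then obtain i where "i \<in> I" "c (f ` I) = f i" by auto
    thus "Pv \<Gamma> (\<Delta> \<union> (\<lambda>(I, f). c (f ` I)) ` {(I, f)})" using p by simp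
  qed
  thus ?thesis using a by (simp add: insert_absorb)
qed

lemma lor: "BigOr I f \<in> \<Gamma> \<Longrightarrow> |I| <o k \<Longrightarrow> f ` I \<subseteq> FF \<Longrightarrow> \<Gamma> \<subseteq> FF \<Longrightarrow> \<Delta> \<subseteq> FF
   \<Longrightarrow> (\<And>i. i \<in> I \<Longrightarrow> Pv (insert (f i) \<Gamma>) \<Delta>) \<Longrightarrow> Pv \<Gamma> \<Delta>"
proof -
  assume a: "BigOr I f \<in> \<Gamma>" "|I| <o k" "f ` I \<subseteq> FF" "\<Gamma> \<subseteq> FF" "\<Delta> \<subseteq> FF"
    and p: "\<And>i. i \<in> I \<Longrightarrow> Pv (insert (f i) \<Gamma>) \<Delta>"
  have "Pv ((\<lambda>(I,f). BigOr I f) ` {(I,f)} \<union> \<Gamma>) \<Delta>"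
  proof (rule LOr)
    show "good_family k G {(I, f)}" using a gf1 by auto
    show "\<Gamma> \<subseteq> FF" "\<Delta> \<subseteq> FF" using a by auto
    fix c assume "\<forall>(I', f')\<in>{(I, f)}. c (f' ` I') \<in> f' ` I'"
    then obtain i where "i \<in> I" "c (f ` I) = f i" by auto
    thus "Pv ((\<lambda>(I, f). c (f ` I)) ` {(I, f)} \<union> \<Gamma>) \<Delta>" using p by simp
  qed
  thus ?thesis using a by (simp add: insert_absorb)
qed

lemma land2: assumes a: "and2 \<phi> \<psi> \<in> \<Gamma>" "\<phi> \<in> FF" "\<psi> \<in> FF" "Pv (insert \<phi> (insert \<psi> \<Gamma>)) \<Delta>"
  shows "Pv \<Gamma> \<Delta>"
proof -
  let ?I = "{fst (two_idx::'i\<times>'i), snd two_idx}" and ?f = "\<lambda>i. if i = fst (two_idx::'i\<times>'i) then \<phi> else \<psi>"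
  have e: "?f ` ?I = {\<phi>,\<psi>}" by (rule img2)
  have m: "BigAnd ?I ?f \<in> \<Gamma>" using a(1) unfolding and2_def .
  show ?thesis
    apply (rule land[OF m finlt])
    apply simp
    unfolding e using a by auto
qed
lemma ror2: assumes a: "or2 \<phi> \<psi> \<in> \<Delta>" "\<phi> \<in> FF" "\<psi> \<in> FF" "Pv \<Gamma> (insert \<phi> (insert \<psi> \<Delta>))"
  shows "Pv \<Gamma> \<Delta>"
proof -
  let ?I = "{fst (two_idx::'i\<times>'i), snd two_idx}" and ?f = "\<lambda>i. if i = fst (two_idx::'i\<times>'i) then \<phi> else \<psi>"
  have e: "?f ` ?I = {\<phi>,\<psi>}" by (rule img2)
  have m: "BigOr ?I ?f \<in> \<Delta>" using a(1) unfolding or2_def .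
  show ?thesis
    apply (rule ror[OF m finlt])
    apply simp
    unfolding e using a by auto
qed
lemma rand2: assumes a: "and2 \<phi> \<psi> \<in> \<Delta>" "\<Gamma> \<subseteq> FF" "\<Delta> \<subseteq> FF" "Pv \<Gamma> (insert \<phi> \<Delta>)" "Pv \<Gamma> (insert \<psi> \<Delta>)"
  shows "Pv \<Gamma> \<Delta>"
proof -
  have "\<phi> \<in> FF" "\<psi> \<in> FF" using a by auto
  let ?I = "{fst (two_idx::'i\<times>'i), snd two_idx}" and ?f = "\<lambda>i. if i = fst (two_idx::'i\<times>'i) then \<phi> else \<psi>"
  have e: "?f ` ?I = {\<phi>,\<psi>}" by (rule img2)
  have m: "BigAnd ?I ?f \<in> \<Delta>" using a(1) unfolding and2_def .
  show ?thesis
    apply (rule rand[OF m finlt])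
    apply simp
    unfolding e using a \<open>\<phi> \<in> FF\<close> \<open>\<psi> \<in> FF\<close> by auto
qed
lemma lor2: assumes a: "or2 \<phi> \<psi> \<in> \<Gamma>" "\<Gamma> \<subseteq> FF" "\<Delta> \<subseteq> FF" "Pv (insert \<phi> \<Gamma>) \<Delta>" "Pv (insert \<psi> \<Gamma>) \<Delta>"
  shows "Pv \<Gamma> \<Delta>"
proof -
  have "\<phi> \<in> FF" "\<psi> \<in> FF" using a by auto
  let ?I = "{fst (two_idx::'i\<times>'i), snd two_idx}" and ?f = "\<lambda>i. if i = fst (two_idx::'i\<times>'i) then \<phi> else \<psi>"
  have e: "?f ` ?I = {\<phi>,\<psi>}" by (rule img2)
  have m: "BigOr ?I ?f \<in> \<Gamma>" using a(1) unfolding or2_def .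
  show ?thesis
    apply (rule lor[OF m finlt])
    apply simp
    unfolding e using a \<open>\<phi> \<in> FF\<close> \<open>\<psi> \<in> FF\<close> by auto
qed


lemma le_refl: "x \<in> FF \<Longrightarrow> Pv {x} {x}"
  by (rule ax[of x]) auto

lemma le_trans: assumes "x \<in> FF" "y \<in> FF" "z \<in> FF" "Pv {x} {y}" "Pv {y} {z}" shows "Pv {x} {z}"
proof (rule cut[of "{x}" "{z}" y])
  show "Pv {x} (insert y {z})" by (rule wk[OF assms(4)]) (use assms in auto)
  show "Pv (insert y {x}) {z}" by (rule wk[OF assms(5)]) (use assms in auto)
qed (use assms in auto)

lemma and_le1: assumes "x \<in> FF" "y \<in> FF" shows "Pv {and2 x y} {x}"
  apply (rule land2[of x y], simp_all add: assms)
  apply (rule ax[of x], simp_all add: assms)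
  done
lemma and_le2: assumes "x \<in> FF" "y \<in> FF" shows "Pv {and2 x y} {y}"
  apply (rule land2[of x y], simp_all add: assms)
  apply (rule ax[of y], simp_all add: assms)
  done
lemma le_and: assumes "x \<in> FF" "y \<in> FF" "z \<in> FF" "Pv {z} {x}" "Pv {z} {y}" shows "Pv {z} {and2 x y}"
  apply (rule rand2[of x y], simp_all add: assms)
  apply (rule wk[OF assms(4)], simp_all add: assms)
  apply (rule wk[OF assms(5)], simp_all add: assms)
  done
lemma or_ge1: assumes "x \<in> FF" "y \<in> FF" shows "Pv {x} {or2 x y}"
  apply (rule ror2[of x y], simp_all add: assms)
  apply (rule ax[of x], simp_all add: assms)
  done
lemma or_ge2: assumes "x \<in> FF" "y \<in> FF" shows "Pv {y} {or2 x y}"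
  apply (rule ror2[of x y], simp_all add: assms)
  apply (rule ax[of y], simp_all add: assms)
  done
lemma or_le: assumes "x \<in> FF" "y \<in> FF" "z \<in> FF" "Pv {x} {z}" "Pv {y} {z}" shows "Pv {or2 x y} {z}"
  apply (rule lor2[of x y], simp_all add: assms)
  apply (rule wk[OF assms(4)], simp_all add: assms)
  apply (rule wk[OF assms(5)], simp_all add: assms)
  done

lemma dist1: assumes "x \<in> FF" "y \<in> FF" "z \<in> FF"
  shows "Pv {and2 x (or2 y z)} {or2 (and2 x y) (and2 x z)}"
  apply (rule land2[of x "or2 y z"], simp_all add: assms)
  apply (rule ror2[of "and2 x y" "and2 x z"], simp_all add: assms)
  apply (rule lor2[of y z], simp_all add: assms)
   apply (rule rand2[of x y], simp_all add: assms)
    apply (rule ax[of x], simp_all add: assms)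
   apply (rule ax[of y], simp_all add: assms)
  apply (rule rand2[of x z], simp_all add: assms)
   apply (rule ax[of x], simp_all add: assms)
  apply (rule ax[of z], simp_all add: assms)
  done

lemma dist2: assumes "x \<in> FF" "y \<in> FF" "z \<in> FF"
  shows "Pv {and2 (or2 x y) (or2 x z)} {or2 x (and2 y z)}"
  apply (rule land2[of "or2 x y" "or2 x z"], simp_all add: assms)
  apply (rule ror2[of x "and2 y z"], simp_all add: assms)
  apply (rule lor2[of x y], simp_all add: assms)
   apply (rule ax[of x], simp_all add: assms)
  apply (rule lor2[of x z], simp_all add: assms)
   apply (rule ax[of x], simp_all add: assms)
  apply (rule rand2[of y z], simp_all add: assms)
   apply (rule ax[of y], simp_all add: assms)
  apply (rule ax[of z], simp_all add: assms)
  done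

lemma top_em: assumes "x \<in> FF" shows "Pv {ftop} {or2 x (Neg x)}"
  apply (rule ror2[of x "Neg x"], simp_all add: assms)
  apply (rule rneg[of x], simp_all add: assms)
  apply (rule ax[of x], simp_all add: assms)
  done

lemma and_neg: assumes "x \<in> FF" shows "Pv {and2 x (Neg x)} {fbot}"
  apply (rule land2[of x "Neg x"], simp_all add: assms)
  apply (rule lneg[of x], simp_all add: assms)
  apply (rule ax[of x], simp_all add: assms)
  done

lemma bot_le: assumes "x \<in> FF" shows "Pv {fbot} {x}"
  unfolding fbot_def
  by (rule lor[of "{}" "\<lambda>_. undefined"]) (simp_all add: assms finlt Fm_fbot[unfolded fbot_def])

lemma le_top: assumes "\<Gamma> \<subseteq> FF" "\<Delta> \<subseteq> FF" "ftop \<in> \<Delta>" shows "Pv \<Gamma> \<Delta>"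
  using assms(3) unfolding ftop_def
  by (rule rand) (use assms finlt[of "{}"] in auto)

lemma neg_anti: assumes "x \<in> FF" "y \<in> FF" "Pv {x} {y}" shows "Pv {Neg y} {Neg x}"
  apply (rule rneg[of x], simp_all add: assms)
  apply (rule lneg[of y], simp_all add: assms)
  apply (rule wk[OF assms(3)], simp_all add: assms)
  done

lemma box_mono: assumes "Pv {x} {y}" shows "Pv {Box x} {Box y}"
  using Nec[where S="{x}" and \<phi>=y, OF assms] by simp

lemma box_top: "Pv {ftop} {Box ftop}"
proof -
  have "Pv {} {ftop}" by (rule le_top) auto
  hence "Pv (Box ` {}) {Box ftop}" by (rule Nec)
  thus ?thesis by (rule wk) auto
qed

lemma box_and: assumes "x \<in> FF" "y \<in> FF" shows "Pv {and2 (Box x) (Box y)} {Box (and2 x y)}"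
proof -
  have "Pv {x, y} {and2 x y}"
    apply (rule rand2[of x y], simp_all add: assms)
     apply (rule ax[of x], simp_all add: assms)
    apply (rule ax[of y], simp_all add: assms)
    done
  hence "Pv (Box ` {x, y}) {Box (and2 x y)}" by (rule Nec)
  hence "Pv {Box x, Box y} {Box (and2 x y)}" by simp
  show ?thesis
    apply (rule land2[of "Box x" "Box y"], simp_all add: assms)
    apply (rule wk[OF \<open>Pv {Box x, Box y} {Box (and2 x y)}\<close>], simp_all add: assms)
    done
qed

lemma bigand_le: assumes "i \<in> I" "|I| <o k" "f ` I \<subseteq> FF" shows "Pv {BigAnd I f} {f i}"
  apply (rule land[of I f], simp_all add: assms)
  apply (rule ax[of "f i"]) using assms by (auto simp: Fm_BigAnd)

lemma le_bigand: assumes "z \<in> FF" "|I| <o k" "f ` I \<subseteq> FF" "\<And>i. i \<in> I \<Longrightarrow> Pv {z} {f i}"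
  shows "Pv {z} {BigAnd I f}"
  apply (rule rand[of I f], simp_all add: assms)
  using assms apply (auto simp: Fm_BigAnd)[1]
  apply (rule wk[OF assms(4)]) using assms by (auto simp: Fm_BigAnd)

lemma bigor_ge: assumes "i \<in> I" "|I| <o k" "f ` I \<subseteq> FF" shows "Pv {f i} {BigOr I f}"
  apply (rule ror[of I f], simp_all add: assms)
  apply (rule ax[of "f i"]) using assms by (auto simp: Fm_BigOr)

lemma bigor_le: assumes "z \<in> FF" "|I| <o k" "f ` I \<subseteq> FF" "\<And>i. i \<in> I \<Longrightarrow> Pv {f i} {z}"
  shows "Pv {BigOr I f} {z}"
  apply (rule lor[of I f], simp_all add: assms)
  using assms apply (auto simp: Fm_BigOr)[1]
  apply (rule wk[OF assms(4)]) using assms by (auto simp: Fm_BigOr)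

lemma linst_top: assumes "\<phi> \<in> Linst k G L" "\<phi> \<in> FF" shows "Pv {ftop} {\<phi>}"
proof (rule TL[where S="{\<phi>}"])
  show "{\<phi>} \<subseteq> T \<union> Linst k G L" using assms by auto
  show "Pv ({\<phi>} \<union> {ftop}) {\<phi>}" by (rule ax[of \<phi>]) (use assms in auto)
qed

lemma fiff_iff: assumes "x \<in> FF" "y \<in> FF"
  shows "Pv {} {fiff x y} \<longleftrightarrow> Pv {x} {y} \<and> Pv {y} {x}"
proof
  assume h: "Pv {} {fiff x y}"
  show "Pv {x} {y} \<and> Pv {y} {x}"
  proof
    show "Pv {x} {y}"
      apply (rule cut[of _ _ "fiff x y"], simp_all add: assms)
       apply (rule wk[OF h], simp_all add: assms)
      unfolding fiff_def
      apply (rule land2[of "or2 (Neg x) y" "or2 (Neg y) x"], simp_all add: assms)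
      apply (rule lor2[of "Neg x" y], simp_all add: assms)
       apply (rule lneg[of x], simp_all add: assms)
       apply (rule ax[of x], simp_all add: assms)
      apply (rule ax[of y], simp_all add: assms)
      done
    show "Pv {y} {x}"
      apply (rule cut[of _ _ "fiff x y"], simp_all add: assms)
       apply (rule wk[OF h], simp_all add: assms)
      unfolding fiff_def
      apply (rule land2[of "or2 (Neg x) y" "or2 (Neg y) x"], simp_all add: assms)
      apply (rule lor2[of "Neg y" x], simp_all add: assms)
       apply (rule lneg[of y], simp_all add: assms)
       apply (rule ax[of y], simp_all add: assms)
      apply (rule ax[of x], simp_all add: assms)
      done
  qed
next
  assume h: "Pv {x} {y} \<and> Pv {y} {x}"
  show "Pv {} {fiff x y}"
    unfolding fiff_def
    apply (rule rand2[of "or2 (Neg x) y" "or2 (Neg y) x"], simp_all add: assms)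
     apply (rule ror2[of "Neg x" y], simp_all add: assms)
     apply (rule rneg[of x], simp_all add: assms)
     apply (rule wk[of "{x}" "{y}"], simp_all add: assms h)
    apply (rule ror2[of "Neg y" x], simp_all add: assms)
    apply (rule rneg[of y], simp_all add: assms)
    apply (rule wk[of "{y}" "{x}"], simp_all add: assms h)
    done
qed


abbreviation "RR \<equiv> lt_rel k G L T"
abbreviation "cls \<equiv> lt_cls k G L T"
abbreviation "AA \<equiv> LT k G L T"

lemma rel_iff: "(x,y) \<in> RR \<longleftrightarrow> x \<in> FF \<and> y \<in> FF \<and> Pv {x} {y} \<and> Pv {y} {x}"
  unfolding lt_rel_def using fiff_iff by auto

lemma equivR: "equiv FF RR"
proof (rule equivI)
  show "RR \<subseteq> FF \<times> FF" unfolding lt_rel_def by auto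
  show "refl_on FF RR" unfolding refl_on_def using rel_iff le_refl by auto
  show "sym RR" by (rule symI) (auto simp: rel_iff)
  show "trans RR" by (rule transI) (auto simp: rel_iff intro: le_trans)
qed

lemma cls_eq: "x \<in> FF \<Longrightarrow> y \<in> FF \<Longrightarrow> cls x = cls y \<longleftrightarrow> Pv {x} {y} \<and> Pv {y} {x}"
  unfolding lt_cls_def using eq_equiv_class_iff[OF equivR] rel_iff by auto

lemma rep_cls: assumes "x \<in> FF" shows "rep (cls x) \<in> FF \<and> Pv {rep (cls x)} {x} \<and> Pv {x} {rep (cls x)}"
proof -
  have "x \<in> cls x" unfolding lt_cls_def by (rule equiv_class_self[OF equivR assms])
  hence "rep (cls x) \<in> cls x" unfolding rep_def by (rule someI)
  thus ?thesis unfolding lt_cls_def using rel_iff by auto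
qed

lemma car_iff: "X \<in> mcar AA \<longleftrightarrow> (\<exists>x\<in>FF. X = cls x)"
  unfolding LT_def quotient_def lt_cls_def by auto

lemma cls_in: "x \<in> FF \<Longrightarrow> cls x \<in> mcar AA"
  using car_iff by auto

lemma cls_rep: assumes "X \<in> mcar AA" shows "rep X \<in> FF" "cls (rep X) = X"
proof -
  obtain x where x: "x \<in> FF" "X = cls x" using assms car_iff by auto
  show "rep X \<in> FF" using rep_cls[OF x(1)] x by simp
  show "cls (rep X) = X" using rep_cls[OF x(1)] x cls_eq by simp
qed

lemma ball_car: "(\<forall>a\<in>mcar AA. P a) \<longleftrightarrow> (\<forall>x\<in>FF. P (cls x))"
  using car_iff by auto

lemma cong_and: "x \<in> FF \<Longrightarrow> x' \<in> FF \<Longrightarrow> y \<in> FF \<Longrightarrow> y' \<in> FF \<Longrightarrow> Pv {x} {x'} \<Longrightarrow> Pv {y} {y'}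
   \<Longrightarrow> Pv {and2 x y} {and2 x' y'}"
  by (rule le_and) (auto intro: le_trans[OF _ _ _ and_le1] le_trans[OF _ _ _ and_le2])

lemma cong_or: "x \<in> FF \<Longrightarrow> x' \<in> FF \<Longrightarrow> y \<in> FF \<Longrightarrow> y' \<in> FF \<Longrightarrow> Pv {x} {x'} \<Longrightarrow> Pv {y} {y'}
   \<Longrightarrow> Pv {or2 x y} {or2 x' y'}"
  by (rule or_le) (auto intro: le_trans[OF _ _ _ _ or_ge1] le_trans[OF _ _ _ _ or_ge2])

lemma meet_cls: "x \<in> FF \<Longrightarrow> y \<in> FF \<Longrightarrow> mmeet AA (cls x) (cls y) = cls (and2 x y)"
  unfolding LT_def using rep_cls[of x] rep_cls[of y] by (simp add: cls_eq cong_and)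
lemma join_cls: "x \<in> FF \<Longrightarrow> y \<in> FF \<Longrightarrow> mjoin AA (cls x) (cls y) = cls (or2 x y)"
  unfolding LT_def using rep_cls[of x] rep_cls[of y] by (simp add: cls_eq cong_or)
lemma neg_cls: "x \<in> FF \<Longrightarrow> mneg AA (cls x) = cls (Neg x)"
  unfolding LT_def using rep_cls[of x] by (simp add: cls_eq neg_anti)
lemma box_cls: "x \<in> FF \<Longrightarrow> mbox AA (cls x) = cls (Box x)"
  unfolding LT_def using rep_cls[of x] by (simp add: cls_eq box_mono)
lemma top_cls: "mtop AA = cls ftop" unfolding LT_def by simp
lemma bot_cls: "mbot AA = cls fbot" unfolding LT_def by simp

lemma mle_cls: assumes "x \<in> FF" "y \<in> FF" shows "mle AA (cls x) (cls y) \<longleftrightarrow> Pv {x} {y}"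
proof -
  have "mle AA (cls x) (cls y) \<longleftrightarrow> Pv {and2 x y} {x} \<and> Pv {x} {and2 x y}"
    unfolding mle_def using assms by (simp add: meet_cls cls_eq)
  also have "\<dots> \<longleftrightarrow> Pv {x} {y}"
    using assms and_le1 le_and le_refl le_trans[OF _ _ _ _ and_le2] by (meson Fm_and2)
  finally show ?thesis .
qed

lemma law_meet_comm: "x \<in> FF \<Longrightarrow> y \<in> FF \<Longrightarrow> cls (and2 x y) = cls (and2 y x)"
  by (simp add: cls_eq le_and and_le1 and_le2)
lemma law_join_comm: "x \<in> FF \<Longrightarrow> y \<in> FF \<Longrightarrow> cls (or2 x y) = cls (or2 y x)"
  by (simp add: cls_eq or_le or_ge1 or_ge2)
lemma law_dist1: assumes "x \<in> FF" "y \<in> FF" "z \<in> FF"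
  shows "cls (and2 x (or2 y z)) = cls (or2 (and2 x y) (and2 x z))"
proof -
  have "Pv {or2 (and2 x y) (and2 x z)} {and2 x (or2 y z)}"
    using assms by (intro or_le le_and) (auto intro: and_le1 le_trans[OF _ _ _ and_le2 or_ge1] le_trans[OF _ _ _ and_le2 or_ge2])
  thus ?thesis using assms dist1 by (simp add: cls_eq)
qed
lemma law_dist2: assumes "x \<in> FF" "y \<in> FF" "z \<in> FF"
  shows "cls (or2 x (and2 y z)) = cls (and2 (or2 x y) (or2 x z))"
proof -
  have "Pv {or2 x (and2 y z)} {and2 (or2 x y) (or2 x z)}"
    using assms by (intro or_le le_and) (auto intro: or_ge1 le_trans[OF _ _ _ and_le1 or_ge2] le_trans[OF _ _ _ and_le2 or_ge2])
  thus ?thesis using assms dist2 by (simp add: cls_eq)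
qed
lemma law_bot: "x \<in> FF \<Longrightarrow> cls (or2 x fbot) = cls x"
  by (simp add: cls_eq or_le le_refl bot_le or_ge1)
lemma law_top: "x \<in> FF \<Longrightarrow> cls (and2 x ftop) = cls x"
  by (simp add: cls_eq le_and le_refl le_top and_le1)
lemma law_em: "x \<in> FF \<Longrightarrow> cls (or2 x (Neg x)) = cls ftop"
  by (simp add: cls_eq le_top top_em)
lemma law_nc: "x \<in> FF \<Longrightarrow> cls (and2 x (Neg x)) = cls fbot"
  by (simp add: cls_eq bot_le and_neg)
lemma law_boxtop: "cls (Box ftop) = cls ftop"
  by (simp add: cls_eq le_top box_top)
lemma law_boxand: "x \<in> FF \<Longrightarrow> y \<in> FF \<Longrightarrow> cls (Box (and2 x y)) = cls (and2 (Box x) (Box y))"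
  by (simp add: cls_eq box_and le_and box_mono and_le1 and_le2)

lemma modal_AA: "modal_algebra AA"
  unfolding modal_algebra_def ball_car
proof (intro conjI)
  note ops = meet_cls join_cls neg_cls box_cls top_cls bot_cls
  show "mtop AA \<in> mcar AA" "mbot AA \<in> mcar AA" by (simp_all add: top_cls bot_cls cls_in)
  show "\<forall>x\<in>FF. mneg AA (cls x) \<in> mcar AA \<and> mbox AA (cls x) \<in> mcar AA"
    by (simp add: ops cls_in)
  show "\<forall>x\<in>FF. \<forall>y\<in>FF. mmeet AA (cls x) (cls y) \<in> mcar AA \<and> mjoin AA (cls x) (cls y) \<in> mcar AA"
    by (simp add: ops cls_in)
  show "\<forall>x\<in>FF. \<forall>y\<in>FF. mmeet AA (cls x) (cls y) = mmeet AA (cls y) (cls x) \<and> mjoin AA (cls x) (cls y) = mjoin AA (cls y) (cls x)"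
    by (simp add: ops law_meet_comm[of x y for x y] law_join_comm)
  show "\<forall>x\<in>FF. \<forall>y\<in>FF. \<forall>z\<in>FF.
        mmeet AA (cls x) (mjoin AA (cls y) (cls z)) = mjoin AA (mmeet AA (cls x) (cls y)) (mmeet AA (cls x) (cls z))
      \<and> mjoin AA (cls x) (mmeet AA (cls y) (cls z)) = mmeet AA (mjoin AA (cls x) (cls y)) (mjoin AA (cls x) (cls z))"
  proof (intro ballI conjI)
    fix x y z assume "x \<in> FF" "y \<in> FF" "z \<in> FF"
    thus "mmeet AA (cls x) (mjoin AA (cls y) (cls z)) = mjoin AA (mmeet AA (cls x) (cls y)) (mmeet AA (cls x) (cls z))"
      by (simp add: ops law_dist1)
    show "mjoin AA (cls x) (mmeet AA (cls y) (cls z)) = mmeet AA (mjoin AA (cls x) (cls y)) (mjoin AA (cls x) (cls z))"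
      using \<open>x \<in> FF\<close> \<open>y \<in> FF\<close> \<open>z \<in> FF\<close> by (simp add: ops law_dist2)
  qed
  show "\<forall>x\<in>FF. mjoin AA (cls x) (mbot AA) = cls x \<and> mmeet AA (cls x) (mtop AA) = cls x"
    by (simp add: ops law_bot law_top)
  show "\<forall>x\<in>FF. mjoin AA (cls x) (mneg AA (cls x)) = mtop AA \<and> mmeet AA (cls x) (mneg AA (cls x)) = mbot AA"
    by (simp add: ops law_em law_nc)
  show "mbox AA (mtop AA) = mtop AA" by (simp add: ops law_boxtop)
  show "\<forall>x\<in>FF. \<forall>y\<in>FF. mbox AA (mmeet AA (cls x) (cls y)) = mmeet AA (mbox AA (cls x)) (mbox AA (cls y))"
    by (simp add: ops law_boxand)
qed

lemma inst_Fm: "(\<And>n. s n \<in> FF) \<Longrightarrow> inst s \<phi> \<in> FF"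
  by (induction \<phi>) auto

lemma meval_cls: fixes v :: "nat \<Rightarrow> _" assumes "\<And>n. v n \<in> mcar AA"
  shows "meval AA v \<phi> = cls (inst (\<lambda>n. rep (v n)) \<phi>)"
proof -
  have s: "\<And>n. rep (v n) \<in> FF" using cls_rep(1)[OF assms] .
  show ?thesis
  proof (induction \<phi>)
    case (MVar n) show ?case using cls_rep(2)[OF assms] by simp
  qed (simp_all add: meet_cls join_cls neg_cls box_cls inst_Fm s)
qed

lemma L_AA: "L_algebra L AA"
  unfolding L_algebra_def
proof (intro conjI ballI allI impI)
  show "modal_algebra AA" by (rule modal_AA)
  fix \<phi> and v :: "nat \<Rightarrow> ('g,'i) fm set" assume phi: "\<phi> \<in> L" and v: "\<forall>n. v n \<in> mcar AA"
  have s: "\<And>n. rep (v n) \<in> FF" using cls_rep(1) v by blast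
  let ?i = "inst (\<lambda>n. rep (v n)) \<phi>"
  have iF: "?i \<in> FF" by (rule inst_Fm[OF s])
  have "?i \<in> Linst k G L" unfolding Linst_def mem_Collect_eq
    by (intro exI[of _ "\<lambda>n. rep (v n)"] exI[of _ \<phi>]) (simp add: phi s)
  hence "Pv {ftop} {?i}" by (rule linst_top[OF _ iF])
  moreover have "Pv {?i} {ftop}" using iF by (intro le_top) auto
  ultimately show "meval AA v \<phi> = mtop AA"
    using v iF by (simp add: meval_cls top_cls cls_eq)
qed

lemma glb_AA: assumes "|I| <o k" "f ` I \<subseteq> FF"
  shows "is_glb AA (cls ` f ` I) (cls (BigAnd I f))"
proof -
  have bF: "BigAnd I f \<in> FF" using assms by (auto simp: Fm_BigAnd)
  have fF: "\<And>i. i \<in> I \<Longrightarrow> f i \<in> FF" using assms by auto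
  show ?thesis
    unfolding is_glb_def ball_car
    using bF fF assms
    by (auto simp: cls_in mle_cls intro: bigand_le le_bigand)
qed

lemma lub_AA: assumes "|I| <o k" "f ` I \<subseteq> FF"
  shows "is_lub AA (cls ` f ` I) (cls (BigOr I f))"
proof -
  have bF: "BigOr I f \<in> FF" using assms by (auto simp: Fm_BigOr)
  have fF: "\<And>i. i \<in> I \<Longrightarrow> f i \<in> FF" using assms by auto
  show ?thesis
    unfolding is_lub_def ball_car
    using bF fF assms
    by (auto simp: cls_in mle_cls intro: bigor_ge bigor_le)
qed

lemma kc_AA: "kappa_complete k AA"
  unfolding kappa_complete_def
proof (intro allI impI)
  fix X assume h: "X \<subseteq> mcar AA \<and> |X| <o k"
  have c: "Card_order k" using card_order_on_Card_order[OF co] by (rule conjunct2)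
  have "|X| \<le>o |Field k|"
    using ordLess_imp_ordLeq[OF ordLess_ordIso_trans[OF conjunct2[OF h] ordIso_symmetric[OF card_of_Field_ordIso[OF c]]]] .
  hence "\<exists>g. inj_on g X \<and> g ` X \<subseteq> Field k" by (subst card_of_ordLeq)
  then obtain g where g: "inj_on g X" "g ` X \<subseteq> Field k" by blast
  define I where "I = g ` X"
  define f where "f = (\<lambda>i. rep (inv_into X g i))"
  have I: "|I| <o k" unfolding I_def by (rule ordLeq_ordLess_trans[OF card_of_image conjunct2[OF h]])
  have fI: "f ` I = rep ` X" unfolding f_def I_def image_image using g(1) by (simp add: inv_into_f_f)
  have hX: "\<And>x. x \<in> X \<Longrightarrow> x \<in> mcar AA" using h by auto
  have F: "f ` I \<subseteq> FF" unfolding fI using cls_rep(1)[OF hX] by auto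
  have X: "cls ` f ` I = X" unfolding fI image_image using cls_rep(2)[OF hX] by simp
  show "(\<exists>m. is_glb AA X m) \<and> (\<exists>j. is_lub AA X j)"
    using glb_AA[OF I F] lub_AA[OF I F] unfolding X by blast
qed

lemma wd_AA: "LT_well_defined k G L T"
  unfolding LT_well_defined_def
  using equivR by (auto simp: rel_iff intro: cong_and cong_or neg_anti box_mono)

end

theorem proposition4p3:
  fixes k :: "'i rel" and G :: "'g set" and L :: "mfm set" and T :: "('g,'i) fm set"
  assumes "card_order k" and "cinfinite k" and "regularCard k"
    and "normal_logic L" and "has_fmp L"
    and "T \<subseteq> Fm k G"
  shows "LT_well_defined k G L T
    \<and> L_algebra L (LT k G L T)
    \<and> kappa_complete k (LT k G L T)
    \<and> (\<forall>I f. |I| <o k \<and> f ` I \<subseteq> Fm k G \<longrightarrow>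
          is_glb (LT k G L T) (lt_cls k G L T ` f ` I) (lt_cls k G L T (BigAnd I f))
        \<and> is_lub (LT k G L T) (lt_cls k G L T ` f ` I) (lt_cls k G L T (BigOr I f)))"
proof (intro conjI allI impI)
  show "LT_well_defined k G L T" by (rule wd_AA[OF assms(1,2)])
  show "L_algebra L (LT k G L T)" by (rule L_AA[OF assms(1,2)])
  show "kappa_complete k (LT k G L T)" by (rule kc_AA[OF assms(1,2)])
  fix I :: "'i set" and f :: "'i \<Rightarrow> ('g,'i) fm" assume h: "|I| <o k \<and> f ` I \<subseteq> Fm k G"
  show "is_glb (LT k G L T) (lt_cls k G L T ` f ` I) (lt_cls k G L T (BigAnd I f))"
    using h by (intro glb_AA[OF assms(1,2)]) auto
  show "is_lub (LT k G L T) (lt_cls k G L T ` f ` I) (lt_cls k G L T (BigOr I f))"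
    using h by (intro lub_AA[OF assms(1,2)]) auto
qed

end
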